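(* Let $p$ be an odd prime. The family $\{1+p^n\mathbb{N}_0:n\in\mathbb{N}\}$ coincides with the set of ${\uparrow}$-chain elements of the poset $\mathcal{X}_p$ (and this set is linearly ordered).
   Context: $\mathbb{N}=\{1,2,\dots\}$, $\mathbb{N}_0=\{0\}\cup\mathbb{N}$, $x^{\mathbb{N}}=\{x^k:k\in\mathbb{N}\}$. $\mathcal{X}_p=\{\overline{a^{\mathbb{N}}}:a\in\mathbb{N}\setminus p\mathbb{N},\ a\ne1\}$, closures taken in the $p$-adic topology on $\mathbb{N}\setminus p\mathbb{N}$ (generated by the sets $x+p^m\mathbb{N}_0$, $x,m\in\mathbb{N}$), partially ordered by reverse inclusion: $X\le Y$ iff $Y\subseteq X$. An element $t$ of a poset $(P,\le)$ is a ${\uparrow}$-chain element if its upper set ${\uparrow}t=\{x\in P:x\ge t\}$ is a chain (any two elements are comparable). *)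

theory Defs
  imports "HOL-Analysis.Analysis" "HOL-Computational_Algebra.Primes"
begin

definition coprime_part :: "nat \<Rightarrow> nat set" where
  "coprime_part p = {n. n \<ge> 1 \<and> \<not> p dvd n}"

definition progr :: "nat \<Rightarrow> nat \<Rightarrow> nat \<Rightarrow> nat set" where
  "progr p x m = {x + p ^ m * k | k. True}"

text \<open>The p-adic topology on N minus pN, generated by the sets x + p^m N_0
  (x, m positive; x ranging over the space so that the sets lie in it).\<close>
definition padic_top :: "nat \<Rightarrow> nat topology" where
  "padic_top p = topology_generated_by
     {progr p x m | x m. x \<in> coprime_part p \<and> m \<ge> 1}"

definition pows :: "nat \<Rightarrow> nat set" where
  "pows a = {a ^ k | k. k \<ge> 1}"

text \<open>The poset X_p (as a set of sets; order is reverse inclusion).\<close>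
definition Xp :: "nat \<Rightarrow> nat set set" where
  "Xp p = {padic_top p closure_of pows a | a. a \<in> coprime_part p \<and> a \<noteq> 1}"

definition Xle :: "nat set \<Rightarrow> nat set \<Rightarrow> bool" where
  "Xle X Y \<longleftrightarrow> Y \<subseteq> X"

definition upchain_elem :: "'a set \<Rightarrow> ('a \<Rightarrow> 'a \<Rightarrow> bool) \<Rightarrow> 'a \<Rightarrow> bool" where
  "upchain_elem P le t \<longleftrightarrow> t \<in> P \<and>
     (\<forall>x\<in>P. \<forall>y\<in>P. le t x \<longrightarrow> le t y \<longrightarrow> le x y \<or> le y x)"

end

theory Submission
  imports Defs "HOL-Number_Theory.Number_Theory"
begin

lemma expand2: "\<exists>W. (1 + y::nat) ^ j = 1 + j * y + y^2 * W"
proof (induction j)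
  case 0 then show ?case by simp
next
  case (Suc j)
  then obtain W where W: "(1 + y) ^ j = 1 + j * y + y^2 * W" by blast
  have "(1 + y) ^ Suc j = (1 + y) * (1 + j * y + y^2 * W)" using W by simp
  also have "\<dots> = 1 + Suc j * y + y^2 * (j + W + y * W)"
    by (simp add: algebra_simps power2_eq_square)
  finally show ?case by blast
qed

lemma expand3: "\<exists>W. (1 + y::nat) ^ n = 1 + n * y + (n choose 2) * y^2 + y^3 * W"
proof (induction n)
  case 0 then show ?case by simp
next
  case (Suc n)
  then obtain W where W: "(1 + y) ^ n = 1 + n * y + (n choose 2) * y^2 + y^3 * W" by blast
  have c: "Suc n choose 2 = (n choose 2) + n"
    using binomial_Suc_Suc[of n 1] by (simp add: numeral_2_eq_2)
  have "(1 + y) ^ Suc n = (1 + y) * (1 + n * y + (n choose 2) * y^2 + y^3 * W)" using W by simp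
  also have "\<dots> = 1 + Suc n * y + ((n choose 2) + n) * y^2 + y^3 * ((n choose 2) + W + y * W)"
    by (simp add: algebra_simps power2_eq_square power3_eq_cube)
  finally show ?case unfolding c by blast
qed

lemma cong_1_plus: "[1 + n*k = (1::nat)] (mod n)"
proof -
  have "[n*k = 0] (mod n)" by (simp add: cong_def)
  then have "[n*k + 1 = 0 + 1] (mod n)" by (rule cong_add) (rule cong_refl)
  then show ?thesis by (simp add: add.commute)
qed

lemma lift_weak:
  fixes p x w :: nat
  assumes "w \<ge> 1" "[x = 1] (mod p^w)" "p \<ge> 2"
  shows "[x ^ p = 1] (mod p^(w+1))"
proof -
  have "x \<ge> 1"
  proof (rule ccontr)
    assume "\<not> x \<ge> 1" then have "x = 0" by simp
    with assms(2) have "p^w dvd 1" by (simp add: cong_def)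
    then show False using assms(1,3) by simp
  qed
  then obtain u where u: "x = u * p^w + 1" using assms(2) cong_le_nat by (metis cong_sym)
  obtain W where W: "(1 + p^w*u) ^ p = 1 + p * (p^w*u) + (p^w*u)^2 * W" using expand2 by blast
  have "x ^ p = 1 + p^(w+1) * (u + p^(w-1) * u^2 * W)"
  proof -
    have e: "(p^w*u)^2 = p^(w+1) * (p^(w-1) * u^2)"
    proof -
      have "w + w = (w+1) + (w-1)" using assms(1) by simp
      then have "p^w * p^w = p^(w+1) * p^(w-1)" by (metis power_add)
      then show ?thesis by (simp add: power2_eq_square algebra_simps)
    qed
    show ?thesis using W e u by (simp add: algebra_simps)
  qed
  then show ?thesis using cong_1_plus[of "p^(w+1)"] by simp
qed

lemma lift_strong:
  fixes p v u :: nat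
  assumes p: "prime p" "odd p" and v: "v \<ge> 1" and u: "\<not> p dvd u"
  shows "\<exists>u'. (1 + p^v * u) ^ p = 1 + p^(v+1)*u' \<and> \<not> p dvd u'"
proof -
  obtain v0 where v0: "v = Suc v0" using v by (cases v) auto
  define q where "q = p^v0"
  have pv: "p^v = p*q" "p^(v+1) = p*p*q" using v0 q_def by simp_all
  define h where "h = (p - 1) div 2"
  have "even (p - 1)" using p by simp
  then have hp: "p * (p - 1) div 2 = p * h" unfolding h_def by (metis div_mult_swap)
  have ch: "p choose 2 = p * h" using choose_two hp by simp
  obtain W where W: "(1 + p*q*u) ^ p = 1 + p * (p*q*u) + (p choose 2) * (p*q*u)^2 + (p*q*u)^3 * W"
    using expand3 by blast
  define u' where "u' = u + p * (h * q * u^2 + q * q * u^3 * W)"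
  have "(1 + p*q*u) ^ p = 1 + p*p*q*u'"
    unfolding W ch u'_def by (simp add: algebra_simps power2_eq_square power3_eq_cube)
  then have "(1 + p^v * u) ^ p = 1 + p^(v+1)*u'" unfolding pv by (simp add: mult.assoc)
  moreover have "\<not> p dvd u'"
  proof
    assume "p dvd u'"
    then have "p dvd u + p * (h * q * u^2 + q * q * u^3 * W)" unfolding u'_def .
    then have "p dvd u" by (simp add: dvd_add_left_iff)
    with u show False by simp
  qed
  ultimately show ?thesis by blast
qed

lemma lift_iter:
  fixes p v u :: nat
  assumes p: "prime p" "odd p" and v: "v \<ge> 1" and u: "\<not> p dvd u"
  shows "\<exists>u'. (1 + p^v * u) ^ (p^j) = 1 + p^(v+j)*u' \<and> \<not> p dvd u'"
proof (induction j)
  case 0 then show ?case using u by auto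
next
  case (Suc j)
  then obtain u1 where u1: "(1 + p^v * u) ^ (p^j) = 1 + p^(v+j)*u1" "\<not> p dvd u1" by blast
  obtain u2 where u2: "(1 + p^(v+j)*u1) ^ p = 1 + p^(v+j+1)*u2" "\<not> p dvd u2"
    using lift_strong[OF p, of "v+j" u1] v u1(2) by auto
  have "(1 + p^v * u) ^ (p^Suc j) = ((1 + p^v * u) ^ (p^j)) ^ p"
    by (simp only: power_Suc2 power_mult)
  also have "\<dots> = 1 + p^(v + Suc j)*u2" using u1 u2 by simp
  finally show ?case using u2 by blast
qed


lemma L_step:
  fixes p v u k m M :: nat
  assumes p: "prime p" "odd p" and v: "v \<ge> 1" and u: "\<not> p dvd u" and M: "M \<ge> v"
    and cg: "[(1 + p^v * u)^k = m] (mod p^M)"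
  shows "\<exists>j. [(1 + p^v * u)^(k + j*p^(M-v)) = m] (mod p^(M+1))"
proof -
  define b where "b = 1 + p^v * u"
  obtain uc where uc: "b^(p^(M-v)) = 1 + p^M*uc" "\<not> p dvd uc"
    using lift_iter[OF p v u, of "M-v"] M unfolding b_def by auto
  have "\<not> p dvd b"
  proof
    assume "p dvd b"
    moreover have "p dvd p^v * u" using v by (simp add: dvd_power)
    ultimately have "p dvd 1" unfolding b_def by (metis dvd_add_left_iff)
    with p show False by simp
  qed
  then have cop: "coprime (b^k*uc) p"
    using uc(2) p(1) by (metis coprime_commute coprime_mult_left_iff coprime_power_left_iff prime_imp_coprime)
  have "[int (b^k) = int m] (mod int (p^M))" using cg cong_int_iff unfolding b_def by blast
  then have "int (p^M) dvd int m - int (b^k)" by (metis cong_iff_dvd_diff cong_sym)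
  then obtain s where s: "int m - int (b^k) = int (p^M) * s" by (elim dvdE)
  obtain j where j: "[b^k*uc*j = nat (s mod int p)] (mod p)" using cong_solve[OF cop] by blast
  have "[int (b^k*uc*j) = int (nat (s mod int p))] (mod int p)" using j cong_int_iff by blast
  moreover have "int (nat (s mod int p)) = s mod int p"
  proof -
    have "int p > 0" using prime_gt_0_nat[OF p(1)] by linarith
    then show ?thesis using pos_mod_sign nat_0_le by blast
  qed
  ultimately have "[int (b^k*uc*j) = s mod int p] (mod int p)" by simp
  moreover have "[s mod int p = s] (mod int p)" unfolding cong_def by (rule mod_mod_trivial)
  ultimately have "[int (b^k*uc*j) = s] (mod int p)" by (rule cong_trans)
  then have "int p dvd int (b^k*uc*j) - s" by (rule cong_iff_dvd_diff[THEN iffD1])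
  then obtain r where r: "int (b^k*uc*j) - s = int p * r" by (elim dvdE)
  obtain W where W: "(1 + p^M*uc)^j = 1 + j*(p^M*uc) + (p^M*uc)^2 * W" using expand2 by blast
  have pw: "b^(k + j*p^(M-v)) = b^k * (1 + p^M*uc)^j"
  proof -
    have "b^(j*p^(M-v)) = (b^(p^(M-v)))^j" by (metis power_mult mult.commute)
    then show ?thesis by (simp add: power_add uc(1))
  qed
  obtain M0 where M0: "M = Suc M0" using M v by (cases M) auto
  define P where "P = int p"
  define B where "B = int (b^k)"
  have e1: "int (b^(k + j*p^(M-v))) = B * (1 + int j*(P^M*int uc) + (P^M*int uc)^2 * int W)"
    unfolding pw W B_def P_def by (simp add: algebra_simps)
  have e2: "int m = B + P^M * s" using s unfolding B_def P_def by simp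
  have e3: "B * int uc * int j = s + P * r" using r unfolding B_def P_def by simp
  have "int (b^(k + j*p^(M-v))) - int m = P^(M+1) * (r + P^M0 * B * int uc^2 * int W)"
  proof -
    have "int (b^(k + j*p^(M-v))) - int m = P^M * (B * int uc * int j - s) + P^M*P^M*(B*int uc^2*int W)"
      unfolding e1 e2 by (simp add: algebra_simps power2_eq_square)
    also have "\<dots> = P^M * (P * r) + P^M*P^M*(B*int uc^2*int W)" using e3 by simp
    also have "\<dots> = P^(M+1) * (r + P^M0 * B * int uc^2 * int W)"
      unfolding M0 by (simp add: algebra_simps)
    finally show ?thesis .
  qed
  then have "int (p^(M+1)) dvd int (b^(k + j*p^(M-v))) - int m" unfolding P_def by simp
  then have "[int (b^(k + j*p^(M-v))) = int m] (mod int (p^(M+1)))" by (simp add: cong_iff_dvd_diff)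
  then show ?thesis unfolding b_def using cong_int_iff by blast
qed

lemma L_all:
  fixes p v u m :: nat
  assumes p: "prime p" "odd p" and v: "v \<ge> 1" and u: "\<not> p dvd u"
    and m: "[m = 1] (mod p^v)"
  shows "\<exists>k\<ge>1. [(1 + p^v * u)^k = m] (mod p^M)"
proof (induction M)
  case 0 then show ?case by (intro exI[of _ 1]) simp
next
  case (Suc M)
  show ?case
  proof (cases "Suc M \<le> v")
    case True
    have "[1 + p^v * u = 1] (mod p^v)" by (rule cong_1_plus)
    then have "[(1 + p^v * u)^1 = m] (mod p^v)" using m cong_sym cong_trans unfolding power_one_right by metis
    moreover have "p^Suc M dvd p^v" using True by (rule le_imp_power_dvd)
    ultimately have "[(1 + p^v * u)^1 = m] (mod p^Suc M)" by (rule cong_dvd_modulus_nat)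
    then show ?thesis by (intro exI[of _ 1] conjI le_refl)
  next
    case False
    then have Mv: "M \<ge> v" by simp
    obtain k where k: "k \<ge> 1" "[(1 + p^v * u)^k = m] (mod p^M)" using Suc.IH by blast
    obtain j where "[(1 + p^v * u)^(k + j*p^(M-v)) = m] (mod p^(M+1))"
      using L_step[OF p v u Mv k(2)] by blast
    then show ?thesis using k(1) by (intro exI[of _ "k + j*p^(M-v)"]) simp
  qed
qed


definition Cset :: "nat \<Rightarrow> nat \<Rightarrow> nat set" where
  "Cset p a = {m. m \<in> coprime_part p \<and> (\<forall>M. \<exists>k\<ge>1. [a^k = m] (mod p^M))}"

lemma progr_self: "x \<in> progr p x n"
  unfolding progr_def by (auto intro: exI[of _ 0])

lemma progr_sub:
  assumes "prime p" "x \<in> coprime_part p" "n \<ge> 1"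
  shows "progr p x n \<subseteq> coprime_part p"
proof
  fix y assume "y \<in> progr p x n"
  then obtain k where y: "y = x + p^n*k" unfolding progr_def by blast
  have "p dvd p^n*k" using assms(3) by (simp add: dvd_power)
  moreover have "\<not> p dvd x" "x \<ge> 1" using assms(2) unfolding coprime_part_def by auto
  ultimately have "\<not> p dvd y" "y \<ge> 1" unfolding y by (auto simp: dvd_add_left_iff)
  then show "y \<in> coprime_part p" unfolding coprime_part_def by auto
qed

lemma progr_mono:
  assumes "n1 \<le> n2" shows "progr p x n2 \<subseteq> progr p x n1"
proof
  fix y assume "y \<in> progr p x n2"
  then obtain k where y: "y = x + p^n2*k" unfolding progr_def by blast
  have "p^n2 = p^n1 * p^(n2-n1)" using assms by (simp flip: power_add)
  then have "y = x + p^n1 * (p^(n2-n1)*k)" unfolding y by simp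
  then show "y \<in> progr p x n1" unfolding progr_def by blast
qed

lemma topspace_padic:
  assumes "prime p" shows "topspace (padic_top p) = coprime_part p"
  unfolding padic_top_def topology_generated_by_topspace
proof
  show "\<Union> {progr p x m |x m. x \<in> coprime_part p \<and> 1 \<le> m} \<subseteq> coprime_part p"
    using progr_sub[OF assms] by blast
  show "coprime_part p \<subseteq> \<Union> {progr p x m |x m. x \<in> coprime_part p \<and> 1 \<le> m}"
  proof
    fix x assume "x \<in> coprime_part p"
    then have "x \<in> progr p x 1" "progr p x 1 \<in> {progr p x m |x m. x \<in> coprime_part p \<and> 1 \<le> m}"
      using progr_self by auto
    then show "x \<in> \<Union> {progr p x m |x m. x \<in> coprime_part p \<and> 1 \<le> m}" by blast
  qed
qed

lemma nbhd:
  assumes "generate_topology_on S U" "S = {progr p x m |x m. x \<in> coprime_part p \<and> 1 \<le> m}"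
  shows "m \<in> U \<Longrightarrow> \<exists>M\<ge>1. progr p m M \<subseteq> U"
  using assms(1)
proof (induction arbitrary: m rule: generate_topology_on.induct)
  case Empty then show ?case by simp
next
  case (Int a b)
  have "m \<in> a" "m \<in> b" using Int.prems by auto
  obtain M1 where M1: "M1 \<ge> 1" "progr p m M1 \<subseteq> a" using Int.IH(1) \<open>m \<in> a\<close> by blast
  obtain M2 where "M2 \<ge> 1" "progr p m M2 \<subseteq> b" using Int.IH(2) \<open>m \<in> b\<close> by blast
  moreover have "progr p m (max M1 M2) \<subseteq> progr p m M1" "progr p m (max M1 M2) \<subseteq> progr p m M2"
    using progr_mono[of M1 "max M1 M2" p m] progr_mono[of M2 "max M1 M2" p m] by auto
  ultimately have "progr p m (max M1 M2) \<subseteq> a \<inter> b" using M1 by blast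
  moreover have "max M1 M2 \<ge> 1" using M1(1) by simp
  ultimately show ?case by blast
next
  case (UN K)
  then obtain k where "k \<in> K" "m \<in> k" by blast
  with UN.IH show ?case by blast
next
  case (Basis s)
  then obtain x N where s: "s = progr p x N" "N \<ge> 1" using assms(2) by blast
  with Basis obtain j where mj: "m = x + p^N*j" unfolding progr_def by blast
  have "progr p m N \<subseteq> s"
  proof
    fix y assume "y \<in> progr p m N"
    then obtain k where "y = m + p^N*k" unfolding progr_def by blast
    then have "y = x + p^N*(j+k)" using mj by (simp add: algebra_simps)
    then show "y \<in> s" unfolding s progr_def by blast
  qed
  then show ?case using s by blast
qed

lemma closure_eq:
  assumes p: "prime p" and a: "a \<in> coprime_part p" "a \<noteq> 1"
  shows "padic_top p closure_of pows a = Cset p a"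
proof
  show "padic_top p closure_of pows a \<subseteq> Cset p a"
  proof
    fix m assume m: "m \<in> padic_top p closure_of pows a"
    have "m \<in> topspace (padic_top p)" by (rule subsetD[OF closure_of_subset_topspace m])
    then have mc: "m \<in> coprime_part p" unfolding topspace_padic[OF p] .
    have mU: "\<And>T. m \<in> T \<Longrightarrow> openin (padic_top p) T \<Longrightarrow> \<exists>y. y \<in> pows a \<and> y \<in> T"
      using m unfolding in_closure_of by blast
    have "\<exists>k\<ge>1. [a^k = m] (mod p^M)" for M
    proof (cases "M = 0")
      case True then show ?thesis by (intro exI[of _ 1]) simp
    next
      case False
      have "progr p m M \<in> {progr p x m |x m. x \<in> coprime_part p \<and> 1 \<le> m}"
        using mc False by (intro CollectI exI[of _ m] exI[of _ M]) simp
      then have "openin (padic_top p) (progr p m M)"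
        unfolding padic_top_def by (rule topology_generated_by_Basis)
      then obtain y where "y \<in> pows a" "y \<in> progr p m M"
        using mU[OF progr_self] by blast
      then obtain k j where kj: "k \<ge> 1" "a^k = m + p^M*j" unfolding pows_def progr_def by blast
      have "[a^k = m] (mod p^M)" unfolding kj(2) by (simp add: cong_def)
      then show ?thesis using kj(1) by blast
    qed
    then show "m \<in> Cset p a" unfolding Cset_def using mc by blast
  qed
next
  show "Cset p a \<subseteq> padic_top p closure_of pows a"
  proof
    fix m assume m: "m \<in> Cset p a"
    then have mc: "m \<in> coprime_part p" unfolding Cset_def by blast
    have hU: "\<exists>y. y \<in> pows a \<and> y \<in> U" if U: "m \<in> U" "openin (padic_top p) U" for U
    proof -
      have "generate_topology_on {progr p x m |x m. x \<in> coprime_part p \<and> 1 \<le> m} U"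
        using U(2) unfolding padic_top_def by (rule openin_topology_generated_by)
      then obtain M where M: "M \<ge> 1" "progr p m M \<subseteq> U" using nbhd[OF _ refl U(1)] by blast
      obtain k where k: "k \<ge> 1" "[a^k = m] (mod p^M)" using m unfolding Cset_def by blast
      define e where "e = totient (p^M)"
      have "\<not> p dvd a" "a \<ge> 1" using a unfolding coprime_part_def by auto
      then have cop: "coprime a (p^M)" using prime_imp_power_coprime[OF p] by blast
      have "[a^e = 1] (mod p^M)" unfolding e_def by (rule euler_theorem[OF cop])
      then have "[(a^e)^m = 1^m] (mod p^M)" by (rule cong_pow)
      then have "[a^k * (a^e)^m = m * 1^m] (mod p^M)" by (rule cong_mult[OF k(2)])
      then have c: "[a^(k + e*m) = m] (mod p^M)" by (simp add: power_add power_mult)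
      have "e \<ge> 1" unfolding e_def using p by (simp add: prime_gt_0_nat Suc_le_eq)
      have "a \<ge> 2" using a \<open>a \<ge> 1\<close> by simp
      then have "2^(k + e*m) \<le> a^(k + e*m)" by (simp add: power_mono)
      moreover have "k + e*m < 2^(k + e*m)" by (rule less_exp)
      moreover have "m \<le> k + e*m"
      proof -
        have "1*m \<le> e*m" using \<open>e \<ge> 1\<close> by (rule mult_le_mono1)
        then show ?thesis using le_add2[of "e*m" k] by linarith
      qed
      ultimately have "m \<le> a^(k + e*m)" by linarith
      then have "\<exists>q. a^(k + e*m) = q * p^M + m" using cong_le_nat c by blast
      then obtain q where "a^(k + e*m) = q * p^M + m" by blast
      then have "a^(k + e*m) = m + p^M*q" by (metis add.commute mult.commute)
      then have "a^(k + e*m) \<in> progr p m M" unfolding progr_def by blast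
      moreover have "a^(k + e*m) \<in> pows a" unfolding pows_def using k(1) by auto
      ultimately show ?thesis using M by blast
    qed
    have tm: "m \<in> topspace (padic_top p)" using mc topspace_padic[OF p] by simp
    show "m \<in> padic_top p closure_of pows a"
      unfolding in_closure_of using tm hU by blast
  qed
qed


lemma Xp_eq:
  assumes p: "prime p" shows "Xp p = {Cset p a | a. a \<in> coprime_part p \<and> a \<noteq> 1}"
  unfolding Xp_def using closure_eq[OF p] by auto

lemma self_in: "a \<in> coprime_part p \<Longrightarrow> a \<in> Cset p a"
  unfolding Cset_def by (auto intro: exI[of _ 1])

lemma Cset_mono:
  assumes "n \<ge> 1" shows "Cset p (a^n) \<subseteq> Cset p a"
proof
  fix m assume "m \<in> Cset p (a^n)"
  then have m: "m \<in> coprime_part p" "\<forall>M. \<exists>k\<ge>1. [(a^n)^k = m] (mod p^M)" unfolding Cset_def by auto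
  have "\<exists>k\<ge>1. [a^k = m] (mod p^M)" for M
  proof -
    obtain k where "k \<ge> 1" "[(a^n)^k = m] (mod p^M)" using m(2) by blast
    moreover have "n * k \<ge> 1" using assms \<open>k \<ge> 1\<close> by simp
    ultimately show ?thesis by (metis power_mult)
  qed
  then show "m \<in> Cset p a" using m(1) unfolding Cset_def by blast
qed

lemma one_cp: "prime p \<Longrightarrow> 1 \<in> coprime_part p"
  unfolding coprime_part_def by auto

lemma progr_cong: "m \<in> progr p 1 v \<Longrightarrow> [m = 1] (mod p^v)"
  unfolding progr_def using cong_1_plus by auto

lemma Cset_progr:
  fixes p v u :: nat
  assumes p: "prime p" "odd p" and v: "v \<ge> 1" and u: "\<not> p dvd u"
  shows "Cset p (1 + p^v * u) = progr p 1 v"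
proof
  show "Cset p (1 + p^v * u) \<subseteq> progr p 1 v"
  proof
    fix m assume "m \<in> Cset p (1 + p^v * u)"
    then have m: "m \<in> coprime_part p" "\<exists>k\<ge>1. [(1 + p^v * u)^k = m] (mod p^v)"
      unfolding Cset_def by auto
    then obtain k where k: "[(1 + p^v * u)^k = m] (mod p^v)" by blast
    have "[(1 + p^v * u)^k = 1^k] (mod p^v)" using cong_1_plus cong_pow by blast
    then have "[m = 1] (mod p^v)" using k by (metis cong_sym cong_trans power_one)
    moreover have "m \<ge> 1" using m(1) unfolding coprime_part_def by auto
    ultimately obtain q where "m = q * p^v + 1" using cong_le_nat by blast
    then show "m \<in> progr p 1 v" unfolding progr_def by (auto simp: algebra_simps)
  qed
next
  show "progr p 1 v \<subseteq> Cset p (1 + p^v * u)"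
  proof
    fix m assume m: "m \<in> progr p 1 v"
    then have "m \<in> coprime_part p" using progr_sub[OF p(1) one_cp[OF p(1)] v] by blast
    moreover have "\<forall>M. \<exists>k\<ge>1. [(1 + p^v * u)^k = m] (mod p^M)"
      using L_all[OF p v u progr_cong[OF m]] by blast
    ultimately show "m \<in> Cset p (1 + p^v * u)" unfolding Cset_def by blast
  qed
qed

lemma Cset_one:
  fixes p a :: nat
  assumes p: "prime p" "odd p" and a: "a \<in> coprime_part p" "a \<noteq> 1" and c: "[a = 1] (mod p)"
  shows "\<exists>v\<ge>1. Cset p a = progr p 1 v"
proof -
  have a1: "a \<ge> 1" using a unfolding coprime_part_def by auto
  then have "a - 1 \<noteq> 0" using a by simp
  moreover have "\<not> is_unit p" using p by auto
  ultimately obtain y where y: "a - 1 = p ^ multiplicity p (a - 1) * y" "\<not> p dvd y"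
    using multiplicity_decompose' by metis
  define v where "v = multiplicity p (a - 1)"
  have pd: "p dvd a - 1" using c a1 cong_altdef_nat by blast
  have "v \<ge> 1"
  proof (rule ccontr)
    assume "\<not> v \<ge> 1" then have "v = 0" by simp
    then have "a - 1 = y" using y v_def by simp
    with pd y(2) show False by simp
  qed
  moreover have "a = 1 + p^v * y" using y a1 unfolding v_def by simp
  ultimately show ?thesis using Cset_progr[OF p _ y(2)] by metis
qed

lemma cp_pow: "prime p \<Longrightarrow> a \<in> coprime_part p \<Longrightarrow> a^n \<in> coprime_part p"
  unfolding coprime_part_def using prime_dvd_power by auto

lemma nonchain:
  fixes p a :: nat
  assumes p: "prime p" "odd p" and a: "a \<in> coprime_part p" "a \<noteq> 1" and c: "\<not> [a = 1] (mod p)"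
  shows "\<exists>x y. x \<in> Xp p \<and> y \<in> Xp p \<and> x \<subseteq> Cset p a \<and> y \<subseteq> Cset p a \<and> \<not> x \<subseteq> y \<and> \<not> y \<subseteq> x"
proof -
  have a2: "a \<ge> 2" "\<not> p dvd a" using a unfolding coprime_part_def by auto
  have p1: "p > 1" using prime_gt_1_nat[OF p(1)] .
  have cop: "coprime p a" using prime_imp_coprime[OF p(1) a2(2)] .
  define d where "d = ord p a"
  have d0: "d > 0" unfolding d_def using ord_gt_0_iff cop by blast
  have ad: "[a^d = 1] (mod p)" unfolding d_def by (rule ord)
  have ferm: "[a^(p-1) = 1] (mod p)" using fermat_theorem[OF p(1) a2(2)] .
  then have "d dvd p - 1" unfolding d_def using ord_divides by blast
  moreover have "p - 1 > 0" using p1 by linarith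
  ultimately have "d \<le> p - 1" by (rule dvd_imp_le)
  then have "d < p" using p1 by linarith
  have "\<not> p dvd d"
  proof
    assume "p dvd d"
    then have "p \<le> d" using d0 by (rule dvd_imp_le)
    with \<open>d < p\<close> show False by linarith
  qed
  then have "coprime p d" using prime_imp_coprime[OF p(1)] by blast
  then have copd: "coprime d p" by (rule coprime_commute[THEN iffD1])
  have "a^d \<ge> a^1" using d0 a2(1) by (intro power_increasing) auto
  then have b1: "a^d \<in> coprime_part p" "a^d \<noteq> 1" using cp_pow[OF p(1) a(1)] a2(1) d0 by auto
  obtain w where w: "w \<ge> 1" "Cset p (a^d) = progr p 1 w" using Cset_one[OF p b1 ad] by blast
  have "a^p \<ge> a^1" using p1 a2(1) by (intro power_increasing) auto
  then have b2: "a^p \<in> coprime_part p" "a^p \<noteq> 1" using cp_pow[OF p(1) a(1)] a2(1) p1 by auto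
  have Xp: "Cset p (a^d) \<in> Xp p" "Cset p (a^p) \<in> Xp p" using Xp_eq[OF p(1)] b1 b2 by auto
  have "d \<ge> 1" "p \<ge> 1" using d0 p1 by auto
  have sub: "Cset p (a^d) \<subseteq> Cset p a" "Cset p (a^p) \<subseteq> Cset p a"
    using Cset_mono[OF \<open>d \<ge> 1\<close>] Cset_mono[OF \<open>p \<ge> 1\<close>] by blast+
  have n1: "\<not> Cset p (a^p) \<subseteq> Cset p (a^d)"
  proof
    assume "Cset p (a^p) \<subseteq> Cset p (a^d)"
    then have "a^p \<in> progr p 1 w" using self_in[OF b2(1)] w(2) by blast
    then have "[a^p = 1] (mod p^w)" by (rule progr_cong)
    moreover have "p dvd p^w" using w(1) by (simp add: dvd_power)
    ultimately have ap1: "[a^p = 1] (mod p)" by (rule cong_dvd_modulus_nat)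
    have "[a^(p-1) * a = 1 * a] (mod p)" using ferm by (rule cong_scalar_right)
    moreover have "a^(p-1) * a = a^p"
    proof -
      have "p = Suc (p - 1)" using p1 by linarith
      then show ?thesis by (metis power_Suc2)
    qed
    ultimately have "[a^p = a] (mod p)" by simp
    then have "[a = a^p] (mod p)" by (rule cong_sym)
    then have "[a = 1] (mod p)" using ap1 by (rule cong_trans)
    with c show False by contradiction
  qed
  have n2: "\<not> Cset p (a^d) \<subseteq> Cset p (a^p)"
  proof
    assume "Cset p (a^d) \<subseteq> Cset p (a^p)"
    moreover have "1 + p^w * 1 \<in> progr p 1 w" unfolding progr_def by blast
    ultimately have "1 + p^w \<in> Cset p (a^p)" using w(2) by auto
    then obtain k where k: "k \<ge> 1" "[(a^p)^k = 1 + p^w] (mod p^(w+1))" unfolding Cset_def by blast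
    have "p dvd p^(w+1)" by (simp add: dvd_power)
    with k(2) have "[(a^p)^k = 1 + p^w] (mod p)" by (rule cong_dvd_modulus_nat)
    moreover have "[1 + p^w = 1] (mod p)"
    proof -
      have "p^w = p * p^(w-1)" using w(1) by (metis Suc_diff_le diff_Suc_1 power_Suc)
      then show ?thesis using cong_1_plus[of p "p^(w-1)"] by simp
    qed
    ultimately have "[(a^p)^k = 1] (mod p)" by (rule cong_trans)
    then have "[a^(p*k) = 1] (mod p)" by (simp add: power_mult)
    then have "d dvd p*k" unfolding d_def using ord_divides by blast
    then have "d dvd k" using copd by (simp add: coprime_dvd_mult_right_iff)
    then obtain k' where k': "k = d * k'" by blast
    have "a^d \<in> progr p 1 w" using self_in[OF b1(1)] w(2) by blast
    then have "[a^d = 1] (mod p^w)" by (rule progr_cong)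
    then have "[(a^d)^p = 1] (mod p^(w+1))" using lift_weak[OF w(1)] p1 by simp
    then have "[((a^d)^p)^k' = 1^k'] (mod p^(w+1))" by (rule cong_pow)
    moreover have "((a^d)^p)^k' = (a^p)^k" unfolding k' by (simp flip: power_mult add: ac_simps)
    ultimately have "[(a^p)^k = 1] (mod p^(w+1))" by simp
    then have "[1 + p^w = (a^p)^k] (mod p^(w+1))" using k(2) cong_sym cong_trans by blast
    then have "[1 + p^w = 1] (mod p^(w+1))" using \<open>[(a^p)^k = 1] (mod p^(w+1))\<close> by (rule cong_trans)
    then have "p^(w+1) dvd (1 + p^w) - 1" using cong_altdef_nat[of 1 "1 + p^w"] by simp
    then have "p^(w+1) dvd p^w" by simp
    then have "w + 1 \<le> w" using p1 by (rule power_dvd_imp_le)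
    then show False by simp
  qed
  show ?thesis using Xp sub n1 n2 by blast
qed

theorem lemma4p5:
  fixes p :: nat
  assumes "prime p" and "odd p"
  shows "{progr p 1 n | n. n \<ge> 1} = {t. upchain_elem (Xp p) Xle t}
       \<and> (\<forall>X\<in>{progr p 1 n | n. n \<ge> 1}. \<forall>Y\<in>{progr p 1 n | n. n \<ge> 1}. Xle X Y \<or> Xle Y X)"
proof -
  note p = assms
  have p1: "p > 1" using prime_gt_1_nat[OF p(1)] .
  have cmp: "Xle (progr p 1 n1) (progr p 1 n2) \<or> Xle (progr p 1 n2) (progr p 1 n1)" for n1 n2
  proof (cases "n1 \<le> n2")
    case True
    then have "progr p 1 n2 \<subseteq> progr p 1 n1" by (rule progr_mono)
    then show ?thesis unfolding Xle_def by blast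
  next
    case False
    then have "n2 \<le> n1" by linarith
    then have "progr p 1 n1 \<subseteq> progr p 1 n2" by (rule progr_mono)
    then show ?thesis unfolding Xle_def by blast
  qed
  have pr_in: "progr p 1 n \<in> Xp p" if "n \<ge> 1" for n
  proof -
    have "\<not> p dvd 1" using p1 by simp
    then have "Cset p (1 + p^n * 1) = progr p 1 n" using Cset_progr[OF p that] by blast
    moreover have "1 + p^n * 1 \<in> progr p 1 n" unfolding progr_def by blast
    then have "1 + p^n * 1 \<in> coprime_part p" using progr_sub[OF p(1) one_cp[OF p(1)] that] by blast
    moreover have "p^n > 0" using p1 by simp
    then have "1 + p^n * 1 \<noteq> 1" by simp
    ultimately show ?thesis using Xp_eq[OF p(1)] by blast
  qed
  have "{progr p 1 n | n. n \<ge> 1} \<subseteq> {t. upchain_elem (Xp p) Xle t}"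
  proof
    fix t assume "t \<in> {progr p 1 n | n. n \<ge> 1}"
    then obtain n where n: "n \<ge> 1" "t = progr p 1 n" by blast
    have isp: "\<exists>v. x = progr p 1 v" if x: "x \<in> Xp p" "Xle t x" for x
    proof -
      obtain a where a: "a \<in> coprime_part p" "a \<noteq> 1" "x = Cset p a" using x(1) Xp_eq[OF p(1)] by blast
      have "a \<in> t" using self_in[OF a(1)] a(3) x(2) unfolding Xle_def by blast
      then have "[a = 1] (mod p^n)" using n(2) progr_cong by blast
      moreover have "p dvd p^n" using n(1) by (simp add: dvd_power)
      ultimately have "[a = 1] (mod p)" by (rule cong_dvd_modulus_nat)
      then obtain v where "v \<ge> 1" "Cset p a = progr p 1 v" using Cset_one[OF p a(1,2)] by blast
      then show ?thesis using a(3) by blast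
    qed
    have "Xle x y \<or> Xle y x" if hxy: "x \<in> Xp p" "y \<in> Xp p" "Xle t x" "Xle t y" for x y
    proof -
      obtain v1 where "x = progr p 1 v1" using isp hxy(1,3) by blast
      moreover obtain v2 where "y = progr p 1 v2" using isp hxy(2,4) by blast
      ultimately show ?thesis using cmp by blast
    qed
    moreover have "t \<in> Xp p" using pr_in n by blast
    ultimately show "t \<in> {t. upchain_elem (Xp p) Xle t}" unfolding upchain_elem_def by blast
  qed
  moreover have "{t. upchain_elem (Xp p) Xle t} \<subseteq> {progr p 1 n | n. n \<ge> 1}"
  proof
    fix t assume "t \<in> {t. upchain_elem (Xp p) Xle t}"
    then have t: "t \<in> Xp p" "\<forall>x\<in>Xp p. \<forall>y\<in>Xp p. Xle t x \<longrightarrow> Xle t y \<longrightarrow> Xle x y \<or> Xle y x"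
      unfolding upchain_elem_def by auto
    obtain a where a: "a \<in> coprime_part p" "a \<noteq> 1" "t = Cset p a" using t(1) Xp_eq[OF p(1)] by blast
    show "t \<in> {progr p 1 n | n. n \<ge> 1}"
    proof (cases "[a = 1] (mod p)")
      case True
      then obtain v where "v \<ge> 1" "Cset p a = progr p 1 v" using Cset_one[OF p a(1,2)] by blast
      then show ?thesis using a(3) by blast
    next
      case False
      obtain x y where xy: "x \<in> Xp p" "y \<in> Xp p" "x \<subseteq> Cset p a" "y \<subseteq> Cset p a" "\<not> x \<subseteq> y" "\<not> y \<subseteq> x"
        using nonchain[OF p a(1,2) False] by blast
      have "Xle t x" "Xle t y" using xy(3,4) a(3) unfolding Xle_def by auto
      then have "Xle x y \<or> Xle y x" using t(2) xy(1,2) by blast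
      then show ?thesis using xy(5,6) unfolding Xle_def by blast
    qed
  qed
  ultimately show ?thesis using cmp by blast
qed

end
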